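(* Let $N$ be a power of $2$ and let $U$ be an orthogonal $N\times N$ matrix. Then there exists a quantum query algorithm making $O(k\cdot 4^k)$ quantum queries to the input $z=(z^{(1)},\dots,z^{(k)})\in\{-1,1\}^{kN}$ that solves the $k$-fold Rorrelation problem with respect to $U$ with success probability at least $2/3$ (i.e., it accepts every YES instance with probability at least $2/3$ and accepts every NO instance with probability at most $1/3$).
   Context: The $k$-fold Rorrelation of $z^{(1)},\dots,z^{(k)}\in\mathbb R^N$ with respect to an orthogonal $N\times N$ matrix $U$ is $\phi_U(z^{(1)},\dots,z^{(k)})=\frac1N\sum_{i_1,\dots,i_k\in[N]} z^{(1)}_{i_1}U_{i_1,i_2}z^{(2)}_{i_2}\cdots U_{i_{k-1},i_k}z^{(k)}_{i_k}$. The $k$-fold Rorrelation problem asks to distinguish YES instances $z\in\{-1,1\}^{kN}$ with $\phi_U(z)\ge 2^{-k}$ from NO instances with $|\phi_U(z)|\le\frac12\cdot 2^{-k}$. A quantum query to $z\in\{-1,1\}^{kN}$ applies the diagonal unitary $|i,w\rangle\mapsto z_i|i,w\rangle$, where $i\in[kN]$ and $w$ is an auxiliary workspace register; the algorithm may otherwise apply arbitrary unitaries independent of $z$. *)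

theory Defs
  imports Complex_Main "HOL-Library.FuncSet"
begin

text \<open>Real N x N matrices are functions nat => nat => real, only entries with
  indices < N matter (0-based indices).\<close>

definition orthogonal_mat :: "nat \<Rightarrow> (nat \<Rightarrow> nat \<Rightarrow> real) \<Rightarrow> bool" where
  "orthogonal_mat N U \<longleftrightarrow>
     (\<forall>i<N. \<forall>j<N. (\<Sum>l<N. U l i * U l j) = (if i = j then 1 else 0))"

text \<open>Input z in R^{kN}: block j (0-based, j < k) is z^{(j+1)}, with
  z^{(j+1)}_i = z (j*N + i) for i < N.\<close>

definition rorrelation :: "nat \<Rightarrow> nat \<Rightarrow> (nat \<Rightarrow> nat \<Rightarrow> real) \<Rightarrow> (nat \<Rightarrow> real) \<Rightarrow> real" where
  "rorrelation k N U z =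
     (1 / real N) * (\<Sum>\<iota> \<in> {..<k} \<rightarrow>\<^sub>E {..<N}.
        (\<Prod>j<k. z (j * N + \<iota> j)) * (\<Prod>j<k - 1. U (\<iota> j) (\<iota> (Suc j))))"

text \<open>The Hilbert space is C^D with D = K * W, where
  K = kN is the size of the query register and W \<ge> 1 the workspace dimension;
  basis state x < D encodes |i,w> with i = x mod K, w = x div K.\<close>

definition unitary_op :: "nat \<Rightarrow> (nat \<Rightarrow> nat \<Rightarrow> complex) \<Rightarrow> bool" where
  "unitary_op D M \<longleftrightarrow>
     (\<forall>y<D. \<forall>y'<D. (\<Sum>x<D. cnj (M x y) * M x y') = (if y = y' then 1 else 0))"

definition apply_op :: "nat \<Rightarrow> (nat \<Rightarrow> nat \<Rightarrow> complex) \<Rightarrow> (nat \<Rightarrow> complex) \<Rightarrow> (nat \<Rightarrow> complex)" where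
  "apply_op D M v = (\<lambda>x. if x < D then (\<Sum>y<D. M x y * v y) else 0)"

definition query_op :: "nat \<Rightarrow> (nat \<Rightarrow> real) \<Rightarrow> (nat \<Rightarrow> complex) \<Rightarrow> (nat \<Rightarrow> complex)" where
  "query_op K z v = (\<lambda>x. complex_of_real (z (x mod K)) * v x)"

text \<open>After the initial unitary, each further unitary V is preceded by one query.\<close>
fun run_alg :: "nat \<Rightarrow> nat \<Rightarrow> (nat \<Rightarrow> real) \<Rightarrow> (nat \<Rightarrow> nat \<Rightarrow> complex) list
                  \<Rightarrow> (nat \<Rightarrow> complex) \<Rightarrow> (nat \<Rightarrow> complex)" where
  "run_alg D K z [] v = v"
| "run_alg D K z (V # Vs) v = run_alg D K z Vs (apply_op D V (query_op K z v))"

definition query_algorithm ::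
  "nat \<Rightarrow> nat \<Rightarrow> (nat \<Rightarrow> nat \<Rightarrow> complex) \<Rightarrow> (nat \<Rightarrow> nat \<Rightarrow> complex) list \<Rightarrow> nat set \<Rightarrow> bool" where
  "query_algorithm K W V0 Vs A \<longleftrightarrow> W \<ge> 1 \<and> unitary_op (K * W) V0
      \<and> (\<forall>V \<in> set Vs. unitary_op (K * W) V) \<and> A \<subseteq> {..<K * W}"

text \<open>Number of queries made = length Vs.\<close>

definition final_state ::
  "nat \<Rightarrow> nat \<Rightarrow> (nat \<Rightarrow> nat \<Rightarrow> complex) \<Rightarrow> (nat \<Rightarrow> nat \<Rightarrow> complex) list \<Rightarrow> (nat \<Rightarrow> real) \<Rightarrow> nat \<Rightarrow> complex" where
  "final_state K W V0 Vs z =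
     run_alg (K * W) K z Vs (apply_op (K * W) V0 (\<lambda>x. if x = 0 then 1 else 0))"

definition accept_prob ::
  "nat \<Rightarrow> nat \<Rightarrow> (nat \<Rightarrow> nat \<Rightarrow> complex) \<Rightarrow> (nat \<Rightarrow> nat \<Rightarrow> complex) list \<Rightarrow> nat set \<Rightarrow> (nat \<Rightarrow> real) \<Rightarrow> real" where
  "accept_prob K W V0 Vs A z = (\<Sum>x\<in>A. (cmod (final_state K W V0 Vs z x))\<^sup>2)"

end

theory Submission
  imports Defs
begin

lemma sum_split_mult:
  fixes f :: "nat \<Rightarrow> 'a::comm_monoid_add"
  shows "(\<Sum>x<N*R. f x) = (\<Sum>r<R. \<Sum>a<N. f (a + N*r))"
proof -
  have "(\<Sum>x<N*R. f x) = (\<Sum>r<R. sum f {r*N..<r*N+N})"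
    using sum.nat_group[of f N R] by (simp add: mult.commute)
  also have "\<dots> = (\<Sum>r<R. \<Sum>a<N. f (a + N*r))"
  proof (rule sum.cong[OF refl])
    fix r
    have "sum f {0 + r*N..<N + r*N} = sum (\<lambda>i. f (i + r*N)) {0..<N}"
      by (rule sum.shift_bounds_nat_ivl)
    then show "sum f {r*N..<r*N+N} = (\<Sum>a<N. f (a + N*r))"
      by (simp add: add.commute mult.commute atLeast0LessThan)
  qed
  finally show ?thesis .
qed

definition mm :: "nat \<Rightarrow> (nat\<Rightarrow>nat\<Rightarrow>complex) \<Rightarrow> (nat\<Rightarrow>nat\<Rightarrow>complex) \<Rightarrow> nat\<Rightarrow>nat\<Rightarrow>complex" where
  "mm D A B = (\<lambda>x y. \<Sum>l<D. A x l * B l y)"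

lemma apply_mm: "apply_op D (mm D A B) v = apply_op D A (apply_op D B v)"
proof (rule ext)
  fix x
  show "apply_op D (mm D A B) v x = apply_op D A (apply_op D B v) x"
  proof (cases "x < D")
    case True
    have "(\<Sum>y<D. (\<Sum>l<D. A x l * B l y) * v y) = (\<Sum>y<D. \<Sum>l<D. A x l * (B l y * v y))"
      by (simp add: sum_distrib_right mult.assoc)
    also have "\<dots> = (\<Sum>l<D. \<Sum>y<D. A x l * (B l y * v y))" by (rule sum.swap)
    also have "\<dots> = (\<Sum>l<D. A x l * (\<Sum>y<D. B l y * v y))" by (simp add: sum_distrib_left)
    finally show ?thesis using True by (simp add: apply_op_def mm_def)
  next
    case False then show ?thesis by (simp add: apply_op_def)
  qed
qed

lemma unitary_mm:
  assumes A: "unitary_op D A" and B: "unitary_op D B"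
  shows "unitary_op D (mm D A B)"
  unfolding unitary_op_def
proof (intro allI impI)
  fix y y' assume y: "y < D" and y': "y' < D"
  have "(\<Sum>x<D. cnj (mm D A B x y) * mm D A B x y')
      = (\<Sum>x<D. \<Sum>l<D. \<Sum>l'<D. (cnj (B l y) * B l' y') * (cnj (A x l) * A x l'))"
    by (simp add: mm_def sum_distrib_left sum_distrib_right mult_ac)
  also have "\<dots> = (\<Sum>l<D. \<Sum>l'<D. \<Sum>x<D. (cnj (B l y) * B l' y') * (cnj (A x l) * A x l'))"
    by (subst sum.swap, subst (2) sum.swap, rule refl)
  also have "\<dots> = (\<Sum>l<D. \<Sum>l'<D. (cnj (B l y) * B l' y') * (if l = l' then 1 else 0))"
    using A unfolding unitary_op_def by (simp add: sum_distrib_left[symmetric])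
  also have "\<dots> = (\<Sum>l<D. cnj (B l y) * B l y')"
    by (simp add: if_distrib cong: if_cong)
  also have "\<dots> = (if y = y' then 1 else 0)" using B y y' unfolding unitary_op_def by simp
  finally show "(\<Sum>x<D. cnj (mm D A B x y) * mm D A B x y') = (if y = y' then 1 else 0)" .
qed

definition permop :: "(nat \<Rightarrow> nat) \<Rightarrow> nat\<Rightarrow>nat\<Rightarrow>complex" where
  "permop \<rho> = (\<lambda>x y. if y = \<rho> x then 1 else 0)"

lemma unitary_perm:
  assumes "bij_betw \<rho> {..<D} {..<D}"
  shows "unitary_op D (permop \<rho>)"
  unfolding unitary_op_def
proof (intro allI impI)
  fix y y' assume y: "y < D" and y': "y' < D"
  have "(\<Sum>x<D. cnj (permop \<rho> x y) * permop \<rho> x y') = (\<Sum>x\<in>{x\<in>{..<D}. \<rho> x = y}. if y = y' then 1 else 0)"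
    by (rule sum.mono_neutral_cong_right) (auto simp: permop_def)
  also obtain x0 where "x0 < D" "\<rho> x0 = y" using assms y by (metis bij_betw_iff_bijections lessThan_iff)
  then have "{x\<in>{..<D}. \<rho> x = y} = {x0}"
    using assms by (auto simp: bij_betw_def inj_on_def)
  finally show "(\<Sum>x<D. cnj (permop \<rho> x y) * permop \<rho> x y') = (if y = y' then 1 else 0)" by simp
qed

lemma apply_perm:
  assumes "\<forall>x<D. \<rho> x < D"
  shows "apply_op D (permop \<rho>) v = (\<lambda>x. if x < D then v (\<rho> x) else 0)"
proof (rule ext)
  fix x show "apply_op D (permop \<rho>) v x = (if x < D then v (\<rho> x) else 0)"
  proof (cases "x < D")
    case True
    have "(\<Sum>y<D. permop \<rho> x y * v y) = (\<Sum>y<D. if y = \<rho> x then v y else 0)"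
      by (rule sum.cong) (auto simp: permop_def)
    also have "\<dots> = v (\<rho> x)" using assms True by (simp add: sum.delta')
    finally show ?thesis using True by (simp add: apply_op_def)
  qed (simp add: apply_op_def)
qed

definition bdop :: "nat \<Rightarrow> (nat\<Rightarrow>nat\<Rightarrow>complex) \<Rightarrow> nat\<Rightarrow>nat\<Rightarrow>complex" where
  "bdop N A = (\<lambda>x y. if x div N = y div N then A (x mod N) (y mod N) else 0)"

lemma unitary_bd:
  assumes N: "0 < N" and A: "unitary_op N A"
  shows "unitary_op (N*R) (bdop N A)"
  unfolding unitary_op_def
proof (intro allI impI)
  fix y y' assume y: "y < N*R" and y': "y' < N*R"
  have "(\<Sum>x<N*R. cnj (bdop N A x y) * bdop N A x y')
     = (\<Sum>r<R. \<Sum>a<N. cnj (bdop N A (a + N*r) y) * bdop N A (a + N*r) y')"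
    by (rule sum_split_mult)
  also have "\<dots> = (\<Sum>r<R. if r = y div N \<and> r = y' div N then (\<Sum>a<N. cnj (A a (y mod N)) * A a (y' mod N)) else 0)"
  proof (intro sum.cong refl)
    fix r assume "r \<in> {..<R}"
    have "\<And>a. a \<in> {..<N} \<Longrightarrow> cnj (bdop N A (a + N*r) y) * bdop N A (a + N*r) y' =
       (if r = y div N \<and> r = y' div N then cnj (A a (y mod N)) * A a (y' mod N) else 0)"
      using N by (auto simp: bdop_def)
    then have "(\<Sum>a<N. cnj (bdop N A (a + N*r) y) * bdop N A (a + N*r) y') =
       (\<Sum>a<N. if r = y div N \<and> r = y' div N then cnj (A a (y mod N)) * A a (y' mod N) else 0)"
      by (intro sum.cong) auto
    then show "(\<Sum>a<N. cnj (bdop N A (a + N*r) y) * bdop N A (a + N*r) y') =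
       (if r = y div N \<and> r = y' div N then (\<Sum>a<N. cnj (A a (y mod N)) * A a (y' mod N)) else 0)"
      by (cases "r = y div N \<and> r = y' div N") auto
  qed
  also have "\<dots> = (if y div N = y' div N then (\<Sum>a<N. cnj (A a (y mod N)) * A a (y' mod N)) else 0)"
  proof -
    have "y div N < R" using y N by (simp add: div_less_iff_less_mult mult.commute)
    then show ?thesis by (auto simp: sum.delta' cong: conj_cong)
  qed
  also have "\<dots> = (if y = y' then 1 else 0)"
    using A N unfolding unitary_op_def
    by (auto, metis div_mult_mod_eq)
  finally show "(\<Sum>x<N*R. cnj (bdop N A x y) * bdop N A x y') = (if y = y' then 1 else 0)" .
qed

lemma apply_bd:
  assumes N: "0 < N"
  shows "apply_op (N*R) (bdop N A) v = (\<lambda>x. if x < N*R then (\<Sum>b<N. A (x mod N) b * v (b + N*(x div N))) else 0)"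
proof (rule ext)
  fix x show "apply_op (N*R) (bdop N A) v x = (if x < N*R then (\<Sum>b<N. A (x mod N) b * v (b + N*(x div N))) else 0)"
  proof (cases "x < N*R")
    case True
    have xr: "x div N < R" using True N by (simp add: div_less_iff_less_mult mult.commute)
    have "(\<Sum>y<N*R. bdop N A x y * v y) = (\<Sum>r<R. \<Sum>b<N. bdop N A x (b + N*r) * v (b + N*r))"
      by (rule sum_split_mult)
    also have "\<dots> = (\<Sum>r<R. if r = x div N then (\<Sum>b<N. A (x mod N) b * v (b + N*r)) else 0)"
      proof (intro sum.cong refl)
      fix r assume "r \<in> {..<R}"
      have "\<And>b. b \<in> {..<N} \<Longrightarrow> bdop N A x (b + N*r) * v (b + N*r) =
         (if r = x div N then A (x mod N) b * v (b + N*r) else 0)"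
        using N by (auto simp: bdop_def)
      then have "(\<Sum>b<N. bdop N A x (b + N*r) * v (b + N*r)) = (\<Sum>b<N. if r = x div N then A (x mod N) b * v (b + N*r) else 0)"
        by (intro sum.cong) auto
      then show "(\<Sum>b<N. bdop N A x (b + N*r) * v (b + N*r)) = (if r = x div N then (\<Sum>b<N. A (x mod N) b * v (b + N*r)) else 0)"
        by (cases "r = x div N") auto
    qed
    also have "\<dots> = (\<Sum>b<N. A (x mod N) b * v (b + N*(x div N)))"
      using xr by (simp add: sum.delta')
    finally show ?thesis using True by (simp add: apply_op_def)
  qed (simp add: apply_op_def)
qed

lemma lt_comb: "a < N \<Longrightarrow> q < R \<Longrightarrow> a + N*q < N*(R::nat)"
proof -
  assume "a < N" "q < R"
  then have "a + N*q < N*Suc q" by simp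
  also have "\<dots> \<le> N*R" using \<open>q < R\<close> by (intro mult_le_mono2) simp
  finally show ?thesis .
qed

definition digit :: "nat \<Rightarrow> nat \<Rightarrow> nat \<Rightarrow> nat" where
  "digit N t w = w div N^t mod N"

lemma digit_0: "0 < N \<Longrightarrow> a < N \<Longrightarrow> digit N 0 (a + N*c) = a"
  by (simp add: digit_def)

lemma digit_Suc: "0 < N \<Longrightarrow> a < N \<Longrightarrow> digit N (Suc t) (a + N*c) = digit N t c"
  by (simp add: digit_def div_mult2_eq)

lemma digit_mod: "0 < N \<Longrightarrow> t < p \<Longrightarrow> digit N t (w mod N^p) = digit N t w"
proof -
  assume N: "0 < N" and tp: "t < p"
  have "N^p = N^t * (N * N^(p - Suc t))" using tp
    by (metis Suc_diff_Suc mult.commute power_Suc power_add add_diff_inverse_nat not_less_eq less_imp_le_nat le_add_diff_inverse)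
  then have "w mod N^p = N^t * (w div N^t mod (N * N^(p - Suc t))) + w mod N^t"
    by (simp add: mod_mult2_eq)
  then have "w mod N^p div N^t = w div N^t mod (N * N^(p - Suc t))"
    using N by simp
  then show ?thesis unfolding digit_def by (simp add: mod_mult2_eq)
qed

lemma digit_top: "0 < N \<Longrightarrow> w < N^m \<Longrightarrow> m = Suc p \<Longrightarrow> digit N p w = w div N^p"
  unfolding digit_def
  by (simp add: div_less_iff_less_mult mult.commute)

lemma digits_zero: "0 < N \<Longrightarrow> w < N^m \<Longrightarrow> (\<forall>t<m. digit N t w = 0) \<Longrightarrow> w = 0"
proof (induction m arbitrary: w)
  case 0 then show ?case by simp
next
  case (Suc m)
  have w0: "w mod N = 0" using Suc.prems(3)[rule_format, of 0] by (simp add: digit_def)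
  have "w = w mod N + N * (w div N)" by simp
  then have wd: "w = N * (w div N)" using w0 by simp
  have "w div N < N^m" using Suc.prems(1,2) by (simp add: div_less_iff_less_mult mult.commute)
  moreover have "\<forall>t<m. digit N t (w div N) = 0"
  proof (intro allI impI)
    fix t assume "t < m"
    have "digit N (Suc t) (0 + N * (w div N)) = digit N t (w div N)"
      using Suc.prems(1) by (rule digit_Suc) (use Suc.prems(1) in simp)
    then show "digit N t (w div N) = 0" using Suc.prems(3) \<open>t<m\<close> wd by (metis Suc_mono add_0)
  qed
  ultimately have "w div N = 0" using Suc.IH Suc.prems(1) by blast
  then show ?case using wd by simp
qed

lemma prod_indicator: "(\<Prod>t<(m::nat). if P t then (1::'a::comm_semiring_1) else 0) = (if \<forall>t<m. P t then 1 else 0)"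
proof (induction m)
  case 0 then show ?case by simp
next
  case (Suc m) then show ?case by (auto simp: less_Suc_eq)
qed

lemma shift_cond: "j < k \<Longrightarrow> j0 < k \<Longrightarrow> (Suc j mod k = j0) = (j = (j0 + k - 1) mod k)"
proof -
  assume jk: "j < k" and j0k: "j0 < k"
  show ?thesis
  proof (cases "Suc j = k")
    case True
    then show ?thesis using j0k by (cases j0) (auto simp: mod_if)
  next
    case False
    then have "Suc j < k" using jk by simp
    then show ?thesis using j0k by (cases j0) (auto simp: mod_if)
  qed
qed

lemma decomp:
  assumes "0 < (N::nat)" "0 < k" "a < N" "j < k"
  shows "(a + N*(j + k*w)) mod N = a" "(a + N*(j + k*w)) div N mod k = j"
        "(a + N*(j + k*w)) div N div k = w"
proof -
  have q: "(a + N*(j + k*w)) div N = j + k*w" using assms by simp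
  show "(a + N*(j + k*w)) mod N = a" using assms by simp
  show "(a + N*(j + k*w)) div N mod k = j" unfolding q using assms by simp
  show "(a + N*(j + k*w)) div N div k = w" unfolding q using assms by simp
qed

lemma recomp: "(x::nat) = x mod N + N*(x div N mod k + k*(x div N div k))"
proof -
  have "x div N mod k + k*(x div N div k) = x div N" by simp
  then show ?thesis by simp
qed

lemma w_bound: "x < N*(k*W) \<Longrightarrow> x div N div k < (W::nat)"
  by (metis div_less_iff_less_mult less_nat_zero_code mult_is_0 mult.commute neq0_conv)

lemma comb_bound: "a < N \<Longrightarrow> j < k \<Longrightarrow> w < W \<Longrightarrow> a + N*(j + k*w) < N*(k*(W::nat))"
  by (intro lt_comb) auto

definition Qst :: "nat \<Rightarrow> nat \<Rightarrow> nat \<Rightarrow> nat \<Rightarrow> (nat\<Rightarrow>complex) \<Rightarrow> (nat\<Rightarrow>nat\<Rightarrow>complex) \<Rightarrow> nat \<Rightarrow> complex" where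
  "Qst N k m j0 \<phi> s x = (if x < N*(k*N^m) \<and> x div N mod k = j0
      then \<phi> (x mod N) * (\<Prod>t<m. s t (digit N t (x div N div k))) else 0)"

definition shiftr :: "nat \<Rightarrow> nat \<Rightarrow> nat \<Rightarrow> nat" where
  "shiftr N k x = x mod N + N*(Suc (x div N mod k) mod k + k*(x div N div k))"

definition rotr :: "nat \<Rightarrow> nat \<Rightarrow> nat \<Rightarrow> nat \<Rightarrow> nat" where
  "rotr N k m x = (x div N div k) div N^(m-1)
      + N*(x div N mod k + k*(x mod N + N*((x div N div k) mod N^(m-1))))"

lemma endo_bij:
  assumes "\<forall>x<D. f x < D" "inj_on f {..<D}"
  shows "bij_betw f {..<D} {..<(D::nat)}"
proof -
  have "f ` {..<D} \<subseteq> {..<D}" using assms by auto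
  then have "f ` {..<D} = {..<D}" using assms(2) by (simp add: endo_inj_surj)
  then show ?thesis using assms(2) by (simp add: bij_betw_def)
qed

context
  fixes N k m :: nat
  assumes N: "0 < N" and k: "0 < k" and m: "0 < m"
begin

lemma shiftr_bound: "x < N*(k*W) \<Longrightarrow> shiftr N k x < N*(k*W)"
  unfolding shiftr_def using N k by (intro comb_bound w_bound) auto

lemma shiftr_inj: "inj_on (shiftr N k) {..<N*(k*W)}"
proof (rule inj_onI)
  fix x y assume "x \<in> {..<N*(k*W)}" "y \<in> {..<N*(k*W)}" and eq: "shiftr N k x = shiftr N k y"
  have c: "x mod N = y mod N" "Suc (x div N mod k) mod k = Suc (y div N mod k) mod k"
       "x div N div k = y div N div k"
    using decomp[OF N k, of "x mod N" "Suc (x div N mod k) mod k" "x div N div k"]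
          decomp[OF N k, of "y mod N" "Suc (y div N mod k) mod k" "y div N div k"] eq N k
    unfolding shiftr_def by (metis mod_less_divisor)+
  have "x div N mod k = y div N mod k"
    using c(2) shift_cond[of "x div N mod k" k "Suc (y div N mod k) mod k"]
          shift_cond[of "y div N mod k" k "Suc (y div N mod k) mod k"] k by simp
  then show "x = y" using c recomp[of x N k] recomp[of y N k] by metis
qed

lemma shiftr_bij: "bij_betw (shiftr N k) {..<N*(k*W)} {..<N*(k*W)}"
  by (intro endo_bij shiftr_inj allI impI shiftr_bound)

lemma rotr_bound: "x < N*(k*N^m) \<Longrightarrow> rotr N k m x < N*(k*N^m)"
proof -
  assume x: "x < N*(k*N^m)"
  define w where "w = x div N div k"
  have w: "w < N^m" using x w_bound unfolding w_def by blast
  have Nm: "N^m = N * N^(m-1)" using m by (metis Suc_diff_1 power_Suc)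
  have top: "w div N^(m-1) < N" using w Nm N by (simp add: div_less_iff_less_mult mult.commute)
  have "x mod N + N*(w mod N^(m-1)) < N^m" unfolding Nm
    using N by (intro lt_comb) auto
  then show ?thesis unfolding rotr_def w_def[symmetric] using top k
    by (intro comb_bound) auto
qed

lemma rotr_inj: "inj_on (rotr N k m) {..<N*(k*N^m)}"
proof (rule inj_onI)
  fix x y assume xD: "x \<in> {..<N*(k*N^m)}" and yD: "y \<in> {..<N*(k*N^m)}" and eq: "rotr N k m x = rotr N k m y"
  have Nm: "N^m = N * N^(m-1)" using m by (metis Suc_diff_1 power_Suc)
  have tx: "x div N div k div N^(m-1) < N" using w_bound[of x N k "N^m"] xD Nm N
    by (simp add: div_less_iff_less_mult mult.commute)
  have ty: "y div N div k div N^(m-1) < N" using w_bound[of y N k "N^m"] yD Nm N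
    by (simp add: div_less_iff_less_mult mult.commute)
  have c: "x div N div k div N^(m-1) = y div N div k div N^(m-1)"
     "x div N mod k = y div N mod k"
     "x mod N + N*((x div N div k) mod N^(m-1)) = y mod N + N*((y div N div k) mod N^(m-1))"
    using decomp[OF N k tx, of "x div N mod k" "x mod N + N*((x div N div k) mod N^(m-1))"]
          decomp[OF N k ty, of "y div N mod k" "y mod N + N*((y div N div k) mod N^(m-1))"] eq k
    unfolding rotr_def by (metis mod_less_divisor)+
  have d1: "(x mod N + N*((x div N div k) mod N^(m-1))) mod N = x mod N"
           "(x mod N + N*((x div N div k) mod N^(m-1))) div N = (x div N div k) mod N^(m-1)"
    using N by simp_all
  have d2: "(y mod N + N*((y div N div k) mod N^(m-1))) mod N = y mod N"
           "(y mod N + N*((y div N div k) mod N^(m-1))) div N = (y div N div k) mod N^(m-1)"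
    using N by simp_all
  have d: "x mod N = y mod N" "(x div N div k) mod N^(m-1) = (y div N div k) mod N^(m-1)"
    using c(3) d1 d2 by metis+
  have "x div N div k = y div N div k"
    using c(1) d(2) by (metis div_mult_mod_eq)
  then show "x = y" using c(2) d(1) recomp[of x N k] recomp[of y N k] by metis
qed

end

context
  fixes N k m :: nat
  assumes N: "0 < N" and k: "0 < k" and m: "0 < m"
begin

lemma Q_query: "query_op (k*N) z (Qst N k m j0 \<phi> s) = Qst N k m j0 (\<lambda>a. complex_of_real (z (a + N*j0)) * \<phi> a) s"
proof (rule ext)
  fix x
  have "x mod (k*N) = x mod N + N*(x div N mod k)"
    by (simp add: mult.commute[of k N] mod_mult2_eq)
  then show "query_op (k*N) z (Qst N k m j0 \<phi> s) x = Qst N k m j0 (\<lambda>a. complex_of_real (z (a + N*j0)) * \<phi> a) s x"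
    unfolding query_op_def Qst_def by auto
qed

lemma Q_bd: "apply_op (N*(k*N^m)) (bdop N A) (Qst N k m j0 \<phi> s) = Qst N k m j0 (\<lambda>a. \<Sum>b<N. A a b * \<phi> b) s"
proof (rule ext)
  fix x
  show "apply_op (N*(k*N^m)) (bdop N A) (Qst N k m j0 \<phi> s) x = Qst N k m j0 (\<lambda>a. \<Sum>b<N. A a b * \<phi> b) s x"
  proof (cases "x < N*(k*N^m)")
    case True
    define q where "q = x div N"
    define P where "P = (\<Prod>t<m. s t (digit N t (q div k)))"
    have q: "q < k*N^m" using True N unfolding q_def by (simp add: div_less_iff_less_mult mult.commute)
    have "\<And>b. b \<in> {..<N} \<Longrightarrow> A (x mod N) b * Qst N k m j0 \<phi> s (b + N*q)
         = (if q mod k = j0 then A (x mod N) b * \<phi> b * P else 0)"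
      using lt_comb[of _ N q "k*N^m"] q N unfolding Qst_def P_def by auto
    then have "(\<Sum>b<N. A (x mod N) b * Qst N k m j0 \<phi> s (b + N*q))
         = (\<Sum>b<N. if q mod k = j0 then A (x mod N) b * \<phi> b * P else 0)"
      by (intro sum.cong) auto
    also have "\<dots> = (if q mod k = j0 then (\<Sum>b<N. A (x mod N) b * \<phi> b) * P else 0)"
      by (simp add: sum_distrib_right)
    finally show ?thesis using True unfolding apply_bd[OF N] Qst_def P_def q_def by simp
  qed (simp add: apply_bd[OF N] Qst_def)
qed

lemma Q_shift:
  assumes j0: "j0 < k"
  shows "apply_op (N*(k*N^m)) (permop (shiftr N k)) (Qst N k m j0 \<phi> s) = Qst N k m ((j0 + k - 1) mod k) \<phi> s"
proof -
  have b: "\<forall>x<N*(k*N^m). shiftr N k x < N*(k*N^m)" using shiftr_bound[OF N k] by blast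
  show ?thesis unfolding apply_perm[OF b]
  proof (rule ext)
    fix x
    show "(if x < N*(k*N^m) then Qst N k m j0 \<phi> s (shiftr N k x) else 0) = Qst N k m ((j0 + k - 1) mod k) \<phi> s x"
    proof (cases "x < N*(k*N^m)")
      case True
      have jk: "x div N mod k < k" "Suc (x div N mod k) mod k < k" using k by auto
      have dd: "shiftr N k x mod N = x mod N" "shiftr N k x div N mod k = Suc (x div N mod k) mod k"
           "shiftr N k x div N div k = x div N div k"
        unfolding shiftr_def using decomp[OF N k _ jk(2)] N by auto
      show ?thesis using True b dd shift_cond[OF jk(1) j0] unfolding Qst_def by auto
    qed (simp add: Qst_def)
  qed
qed

lemma Q_rot:
  "apply_op (N*(k*N^m)) (permop (rotr N k m)) (Qst N k m j0 \<phi> s) =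
   Qst N k m j0 (s 0) (\<lambda>t. if Suc t < m then s (Suc t) else \<phi>)"
proof -
  have b: "\<forall>x<N*(k*N^m). rotr N k m x < N*(k*N^m)" using rotr_bound[OF N k m] by blast
  obtain p where mp: "m = Suc p" using m by (cases m) auto
  show ?thesis unfolding apply_perm[OF b]
  proof (rule ext)
    fix x
    show "(if x < N*(k*N^m) then Qst N k m j0 \<phi> s (rotr N k m x) else 0) =
          Qst N k m j0 (s 0) (\<lambda>t. if Suc t < m then s (Suc t) else \<phi>) x"
    proof (cases "x < N*(k*N^m)")
      case True
      define w where "w = x div N div k"
      define a where "a = x mod N"
      define j where "j = x div N mod k"
      define w' where "w' = a + N*(w mod N^p)"
      have w: "w < N^m" using w_bound True unfolding w_def by blast
      have top: "w div N^p < N" using w mp N by (simp add: div_less_iff_less_mult mult.commute)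
      have jk: "j < k" and aN: "a < N" using k N unfolding j_def a_def by auto
      have rx: "rotr N k m x = w div N^p + N*(j + k*w')"
        unfolding rotr_def w'_def w_def a_def j_def mp by simp
      have dd: "rotr N k m x mod N = w div N^p" "rotr N k m x div N mod k = j"
           "rotr N k m x div N div k = w'"
        unfolding rx using decomp[OF N k top jk] by auto
      have "(\<Prod>t<m. s t (digit N t w')) = s 0 (digit N 0 w') * (\<Prod>t<p. s (Suc t) (digit N (Suc t) w'))"
        unfolding mp by (rule prod.lessThan_Suc_shift)
      also have "\<dots> = s 0 a * (\<Prod>t<p. s (Suc t) (digit N t (w mod N^p)))"
        unfolding w'_def using digit_0[OF N aN] digit_Suc[OF N aN] by simp
      also have "(\<Prod>t<p. s (Suc t) (digit N t (w mod N^p))) = (\<Prod>t<p. s (Suc t) (digit N t w))"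
        by (intro prod.cong refl) (simp add: digit_mod[OF N])
      finally have L: "(\<Prod>t<m. s t (digit N t w')) = s 0 a * (\<Prod>t<p. s (Suc t) (digit N t w))" .
      have "(\<Prod>t<m. (if Suc t < m then s (Suc t) else \<phi>) (digit N t w))
          = (\<Prod>t<p. s (Suc t) (digit N t w)) * \<phi> (digit N p w)"
      proof -
        have "(\<Prod>t<p. (if Suc t < m then s (Suc t) else \<phi>) (digit N t w)) = (\<Prod>t<p. s (Suc t) (digit N t w))"
          unfolding mp by (intro prod.cong refl) simp
        then show ?thesis unfolding mp by simp
      qed
      also have "\<dots> = (\<Prod>t<p. s (Suc t) (digit N t w)) * \<phi> (w div N^p)"
        using digit_top[OF N w mp] by simp
      finally have R: "(\<Prod>t<m. (if Suc t < m then s (Suc t) else \<phi>) (digit N t w))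
          = (\<Prod>t<p. s (Suc t) (digit N t w)) * \<phi> (w div N^p)" .
      show ?thesis using True b dd L R unfolding Qst_def w_def[symmetric] a_def[symmetric] j_def[symmetric]
        by (simp add: mult_ac)
    qed (simp add: Qst_def)
  qed
qed

lemma Q_cong: "(\<forall>t<m. s t = s' t) \<Longrightarrow> Qst N k m j0 \<phi> s = Qst N k m j0 \<phi> s'"
proof -
  assume "\<forall>t<m. s t = s' t"
  then have "\<And>d. (\<Prod>t<m. s t (d t)) = (\<Prod>t<m. s' t (d t))" by (intro prod.cong) auto
  then show ?thesis unfolding Qst_def by presburger
qed

lemma Q_init: "(\<lambda>x. if x = 0 then 1 else 0) = Qst N k m 0 (\<lambda>a. if a = 0 then 1 else 0) (\<lambda>t a. if a = 0 then 1 else 0)"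
proof (rule ext)
  fix x
  show "(if x = 0 then 1 else 0) = Qst N k m 0 (\<lambda>a. if a = 0 then 1 else 0) (\<lambda>t a. if a = 0 then 1 else 0) x"
  proof (cases "x = 0")
    case True
    have "0 < N*(k*N^m)" using N k by simp
    then show ?thesis using True N unfolding Qst_def by (simp add: digit_def)
  next
    case False
    show ?thesis
    proof (cases "x < N*(k*N^m) \<and> x div N mod k = 0 \<and> x mod N = 0 \<and> (\<forall>t<m. digit N t (x div N div k) = 0)")
      case True
      then have "x div N div k = 0" using digits_zero[OF N w_bound] by blast
      then have "x = 0" using True recomp[of x N k] by simp
      then show ?thesis using False by simp
    next
      case F: False
      show ?thesis using False F unfolding Qst_def prod_indicator by auto
    qed
  qed
qed

end

definition cns :: "nat \<Rightarrow> nat \<Rightarrow> (nat \<Rightarrow> nat) \<Rightarrow> nat \<Rightarrow> nat" where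
  "cns L a g = (\<lambda>j. if j = 0 then a else if j < Suc L then g (j - 1) else undefined)"

lemma sum_PiE_Suc:
  "(\<Sum>\<iota>\<in>{..<Suc L} \<rightarrow>\<^sub>E {..<N}. f \<iota>) = (\<Sum>a<N. \<Sum>g\<in>{..<L} \<rightarrow>\<^sub>E {..<N}. f (cns L a g))"
proof -
  have "(\<Sum>a<N. \<Sum>g\<in>{..<L} \<rightarrow>\<^sub>E {..<N}. f (cns L a g)) = (\<Sum>p\<in>{..<N} \<times> ({..<L} \<rightarrow>\<^sub>E {..<N}). f (cns L (fst p) (snd p)))"
    by (simp add: sum.cartesian_product split_beta)
  also have "\<dots> = (\<Sum>\<iota>\<in>{..<Suc L} \<rightarrow>\<^sub>E {..<N}. f \<iota>)"
  proof (rule sum.reindex_bij_witness[where i="\<lambda>\<iota>. (\<iota> 0, \<lambda>t. if t < L then \<iota> (Suc t) else undefined)"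
        and j="\<lambda>p. cns L (fst p) (snd p)"])
    fix p assume p: "p \<in> {..<N} \<times> ({..<L} \<rightarrow>\<^sub>E {..<N})"
    show "(cns L (fst p) (snd p) 0, \<lambda>t. if t < L then cns L (fst p) (snd p) (Suc t) else undefined) = p"
      using p by (cases p) (auto simp: cns_def PiE_def extensional_def fun_eq_iff)
    show "cns L (fst p) (snd p) \<in> {..<Suc L} \<rightarrow>\<^sub>E {..<N}"
      using p by (cases p) (auto simp: cns_def PiE_def extensional_def Pi_def)
  next
    fix \<iota> assume i: "\<iota> \<in> {..<Suc L} \<rightarrow>\<^sub>E {..<N}"
    show "cns L (fst (\<iota> 0, \<lambda>t. if t < L then \<iota> (Suc t) else undefined)) (snd (\<iota> 0, \<lambda>t. if t < L then \<iota> (Suc t) else undefined)) = \<iota>"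
      using i by (auto simp: cns_def PiE_def extensional_def fun_eq_iff)
    show "(\<iota> 0, \<lambda>t. if t < L then \<iota> (Suc t) else undefined) \<in> {..<N} \<times> ({..<L} \<rightarrow>\<^sub>E {..<N})"
      using i by (auto simp: PiE_def extensional_def Pi_def)
  qed simp
  finally show ?thesis by simp
qed

fun hv :: "nat \<Rightarrow> (nat \<Rightarrow> nat \<Rightarrow> real) \<Rightarrow> nat \<Rightarrow> (nat \<Rightarrow> real) \<Rightarrow> nat \<Rightarrow> real" where
  "hv N U 0 z = (\<lambda>a. 1 / sqrt (real N))"
| "hv N U (Suc L) z = (\<lambda>a. \<Sum>b<N. U a b * (z b * hv N U L (\<lambda>i. z (i + N)) b))"

lemma hv_sum:
  "hv N U L z a = (1 / sqrt (real N)) * (\<Sum>g\<in>{..<L} \<rightarrow>\<^sub>E {..<N}.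
      (\<Prod>j<L. z (j*N + g j)) * (\<Prod>j<L. U (cns L a g j) (cns L a g (Suc j))))"
proof (induction L arbitrary: z a)
  case 0
  then show ?case by simp
next
  case (Suc L)
  define z' where "z' = (\<lambda>i. z (i + N))"
  have "hv N U (Suc L) z a = (\<Sum>b<N. U a b * (z b * hv N U L z' b))"
    by (simp add: z'_def)
  also have "\<dots> = (\<Sum>b<N. \<Sum>g\<in>{..<L} \<rightarrow>\<^sub>E {..<N}. (1 / sqrt (real N)) *
      ((\<Prod>j<Suc L. z (j*N + cns L b g j)) * (\<Prod>j<Suc L. U (cns (Suc L) a (cns L b g) j) (cns (Suc L) a (cns L b g) (Suc j)))))"
  proof (intro sum.cong refl)
    fix b assume "b \<in> {..<N}"
    have "U a b * (z b * hv N U L z' b) = (\<Sum>g\<in>{..<L} \<rightarrow>\<^sub>E {..<N}. (1 / sqrt (real N)) *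
      (U a b * z b * ((\<Prod>j<L. z' (j*N + g j)) * (\<Prod>j<L. U (cns L b g j) (cns L b g (Suc j))))))"
      unfolding Suc.IH[of z' b] by (simp add: sum_distrib_left mult_ac)
    also have "\<dots> = (\<Sum>g\<in>{..<L} \<rightarrow>\<^sub>E {..<N}. (1 / sqrt (real N)) *
      ((\<Prod>j<Suc L. z (j*N + cns L b g j)) * (\<Prod>j<Suc L. U (cns (Suc L) a (cns L b g) j) (cns (Suc L) a (cns L b g) (Suc j)))))"
    proof (intro sum.cong refl)
      fix g
      have p1: "(\<Prod>j<Suc L. z (j*N + cns L b g j)) = z b * (\<Prod>j<L. z' (j*N + g j))"
        unfolding prod.lessThan_Suc_shift
        by (simp add: cns_def z'_def add_ac)
      have p2: "(\<Prod>j<Suc L. U (cns (Suc L) a (cns L b g) j) (cns (Suc L) a (cns L b g) (Suc j)))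
           = U a b * (\<Prod>j<L. U (cns L b g j) (cns L b g (Suc j)))"
      proof -
        have "(\<Prod>j<L. U (cns (Suc L) a (cns L b g) (Suc j)) (cns (Suc L) a (cns L b g) (Suc (Suc j))))
            = (\<Prod>j<L. U (cns L b g j) (cns L b g (Suc j)))"
          by (intro prod.cong refl) (simp add: cns_def)
        then show ?thesis unfolding prod.lessThan_Suc_shift by (simp add: cns_def)
      qed
      show "(1 / sqrt (real N)) * (U a b * z b * ((\<Prod>j<L. z' (j*N + g j)) * (\<Prod>j<L. U (cns L b g j) (cns L b g (Suc j)))))
         = (1 / sqrt (real N)) * ((\<Prod>j<Suc L. z (j*N + cns L b g j)) * (\<Prod>j<Suc L. U (cns (Suc L) a (cns L b g) j) (cns (Suc L) a (cns L b g) (Suc j))))"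
        unfolding p1 p2 by (simp add: mult_ac)
    qed
    finally show "U a b * (z b * hv N U L z' b) = (\<Sum>g\<in>{..<L} \<rightarrow>\<^sub>E {..<N}. (1 / sqrt (real N)) *
      ((\<Prod>j<Suc L. z (j*N + cns L b g j)) * (\<Prod>j<Suc L. U (cns (Suc L) a (cns L b g) j) (cns (Suc L) a (cns L b g) (Suc j)))))" .
  qed
  also have "\<dots> = (1 / sqrt (real N)) * (\<Sum>g\<in>{..<Suc L} \<rightarrow>\<^sub>E {..<N}.
      (\<Prod>j<Suc L. z (j*N + g j)) * (\<Prod>j<Suc L. U (cns (Suc L) a g j) (cns (Suc L) a g (Suc j))))"
    unfolding sum_PiE_Suc by (simp add: sum_distrib_left)
  finally show ?case .
qed

lemma rorr_hv:
  assumes N: "0 < N"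
  shows "rorrelation (Suc L) N U z = (\<Sum>a<N. (1 / sqrt (real N)) * (z a * hv N U L (\<lambda>i. z (i + N)) a))"
proof -
  define z' where "z' = (\<lambda>i. z (i + N))"
  have sN: "sqrt (real N) * sqrt (real N) = real N" using N by simp
  have "rorrelation (Suc L) N U z = (1 / real N) * (\<Sum>a<N. \<Sum>g\<in>{..<L} \<rightarrow>\<^sub>E {..<N}.
        (\<Prod>j<Suc L. z (j * N + cns L a g j)) * (\<Prod>j<L. U (cns L a g j) (cns L a g (Suc j))))"
    unfolding rorrelation_def sum_PiE_Suc by simp
  also have "\<dots> = (\<Sum>a<N. (1 / real N) * (z a * (sqrt (real N) * hv N U L z' a)))"
  proof -
    have "\<And>a. (\<Sum>g\<in>{..<L} \<rightarrow>\<^sub>E {..<N}.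
        (\<Prod>j<Suc L. z (j * N + cns L a g j)) * (\<Prod>j<L. U (cns L a g j) (cns L a g (Suc j))))
        = z a * (sqrt (real N) * hv N U L z' a)"
    proof -
      fix a
      have e: "\<And>g. (\<Prod>j<Suc L. z (j * N + cns L a g j)) = z a * (\<Prod>j<L. z' (j*N + g j))"
        unfolding prod.lessThan_Suc_shift by (simp add: cns_def z'_def add_ac)
      show "(\<Sum>g\<in>{..<L} \<rightarrow>\<^sub>E {..<N}.
        (\<Prod>j<Suc L. z (j * N + cns L a g j)) * (\<Prod>j<L. U (cns L a g j) (cns L a g (Suc j))))
        = z a * (sqrt (real N) * hv N U L z' a)"
        unfolding e hv_sum[of N U L z' a] using N
        by (simp add: sum_distrib_left mult_ac)
    qed
    then show ?thesis by (simp add: sum_distrib_left)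
  qed
  also have "\<dots> = (\<Sum>a<N. (1 / sqrt (real N)) * (z a * hv N U L z' a))"
  proof (intro sum.cong refl)
    fix a
    have "(1 / real N) * sqrt (real N) = 1 / sqrt (real N)" using N sN
      by (metis divide_divide_eq_right div_by_1 divide_self_if mult.commute nonzero_divide_mult_cancel_left real_sqrt_eq_zero_cancel_iff of_nat_0_less_iff less_numeral_extra(3) times_divide_eq_right)
    then show "(1 / real N) * (z a * (sqrt (real N) * hv N U L z' a)) = (1 / sqrt (real N)) * (z a * hv N U L z' a)"
      by (metis mult.assoc mult.left_commute)
  qed
  finally show ?thesis unfolding z'_def .
qed

definition hw :: "nat \<Rightarrow> nat \<Rightarrow> real" where
  "hw N a = (if a = 0 then 1 else 0) - 1 / sqrt (real N)"

definition hh :: "nat \<Rightarrow> nat \<Rightarrow> nat \<Rightarrow> real" where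
  "hh N a b = (if a = b then 1 else 0) - 2 / (\<Sum>c<N. (hw N c)^2) * (hw N a * hw N b)"

lemma sum_delta_mult: "i < (N::nat) \<Longrightarrow> (\<Sum>l<N. (if l = i then (1::real) else 0) * f l) = f i"
proof -
  assume i: "i < N"
  have "(\<Sum>l<N. (if l = i then (1::real) else 0) * f l) = (\<Sum>l<N. if l = i then f l else 0)"
    by (intro sum.cong) auto
  then show ?thesis using i by (simp add: sum.delta)
qed

lemma hh_orth: "orthogonal_mat N (hh N)"
  unfolding orthogonal_mat_def
proof (intro allI impI)
  fix i j assume i: "i < N" and j: "j < N"
  define x where "x = hw N"
  define s where "s = (\<Sum>c<N. (x c)^2)"
  define c where "c = 2 / s"
  define d where "d = (\<lambda>a b::nat. if a = b then (1::real) else 0)"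
  have hh: "\<And>a b. hh N a b = d a b - c * (x a * x b)"
    unfolding hh_def c_def s_def x_def d_def by simp
  have t: "\<And>l. hh N l i * hh N l j = d l i * d l j - c * x j * (d l i * x l) - c * x i * (d l j * x l)
            + c * c * x i * x j * (x l)^2"
    unfolding hh by (simp add: algebra_simps power2_eq_square)
  have "(\<Sum>l<N. hh N l i * hh N l j) =
      (\<Sum>l<N. d l i * d l j) - c * x j * (\<Sum>l<N. d l i * x l) - c * x i * (\<Sum>l<N. d l j * x l)
      + c * c * x i * x j * (\<Sum>l<N. (x l)^2)"
    unfolding t by (simp add: sum.distrib sum_subtractf sum_distrib_left)
  also have "\<dots> = d i j - c * x j * x i - c * x i * x j + c * c * x i * x j * s"
    unfolding s_def d_def using sum_delta_mult[OF i, of "\<lambda>l. if l = j then 1 else 0"]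
      sum_delta_mult[OF i, of x] sum_delta_mult[OF j, of x] by simp
  also have "\<dots> = d i j - 2 * c * x i * x j + c * c * s * x i * x j"
    by (simp add: algebra_simps)
  also have "\<dots> = d i j"
  proof (cases "s = 0")
    case True then show ?thesis unfolding c_def by simp
  next
    case False
    then have "c * c * s = 2 * c" unfolding c_def by (simp add: field_simps power2_eq_square)
    then show ?thesis by simp
  qed
  finally show "(\<Sum>l<N. hh N l i * hh N l j) = (if i = j then 1 else 0)" unfolding d_def .
qed

lemma hw_sum: "0 < N \<Longrightarrow> (\<Sum>c<N. (hw N c)^2) = 2 * hw N 0"
proof -
  assume N: "0 < N"
  have sN: "sqrt (real N) * sqrt (real N) = real N" using N by simp
  have "\<And>c. (hw N c)^2 = (if c = 0 then 1 - 2 / sqrt (real N) else 0) + 1 / real N"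
    unfolding hw_def using N sN by (auto simp: power2_eq_square field_simps)
  then have "(\<Sum>c<N. (hw N c)^2) = (1 - 2 / sqrt (real N)) + real N * (1 / real N)"
    using N by (simp add: sum.distrib)
  also have "\<dots> = 2 * hw N 0" using N unfolding hw_def by simp
  finally show ?thesis .
qed

lemma hh_col0: "0 < N \<Longrightarrow> a < N \<Longrightarrow> hh N a 0 = 1 / sqrt (real N)"
proof -
  assume N: "0 < N" and a: "a < N"
  show ?thesis
  proof (cases "hw N 0 = 0")
    case True
    then have "sqrt (real N) = 1" unfolding hw_def by (auto simp: field_simps)
    then have "N = 1" by simp
    then show ?thesis using a True unfolding hh_def by simp
  next
    case False
    have "hh N a 0 = (if a = 0 then 1 else 0) - hw N a"
      unfolding hh_def hw_sum[OF N] using False by simp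
    then show ?thesis unfolding hw_def by simp
  qed
qed

lemma hh_sym: "hh N a b = hh N b a"
  unfolding hh_def by (cases "a = b") (auto simp: mult.commute)

lemma orth_norm:
  assumes "orthogonal_mat N A"
  shows "(\<Sum>a<N. (\<Sum>b<N. A a b * f b)^2) = (\<Sum>b<N. (f b)^2)"
proof -
  have "(\<Sum>a<N. (\<Sum>b<N. A a b * f b)^2) = (\<Sum>a<N. \<Sum>b<N. \<Sum>b'<N. (f b * f b') * (A a b * A a b'))"
    by (simp add: power2_eq_square sum_distrib_left sum_distrib_right mult_ac)
  also have "\<dots> = (\<Sum>b<N. \<Sum>b'<N. \<Sum>a<N. (f b * f b') * (A a b * A a b'))"
    by (subst sum.swap, subst (2) sum.swap, rule refl)
  also have "\<dots> = (\<Sum>b<N. \<Sum>b'<N. (f b * f b') * (if b = b' then 1 else 0))"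
    using assms unfolding orthogonal_mat_def by (simp add: sum_distrib_left[symmetric])
  also have "\<dots> = (\<Sum>b<N. (f b)^2)"
    by (simp add: if_distrib power2_eq_square cong: if_cong)
  finally show ?thesis .
qed

lemma hv_norm:
  assumes N: "0 < N" and U: "orthogonal_mat N U"
  shows "(\<forall>i < L*N. z i \<in> {-1, 1}) \<Longrightarrow> (\<Sum>a<N. (hv N U L z a)^2) = 1"
proof (induction L arbitrary: z)
  case 0
  then show ?case using N by (simp add: power_divide)
next
  case (Suc L)
  define z' where "z' = (\<lambda>i. z (i + N))"
  define f where "f = (\<lambda>b. z b * hv N U L z' b)"
  have z1: "\<forall>i < L*N. z' i \<in> {-1, 1}" using Suc.prems unfolding z'_def by auto
  have e: "hv N U (Suc L) z = (\<lambda>a. \<Sum>b<N. U a b * f b)" unfolding f_def z'_def by simp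
  have "(\<Sum>a<N. (hv N U (Suc L) z a)^2) = (\<Sum>b<N. (f b)^2)"
    unfolding e by (rule orth_norm[OF U])
  also have "\<dots> = (\<Sum>b<N. (hv N U L z' b)^2)"
  proof (intro sum.cong refl)
    fix b assume "b \<in> {..<N}"
    then have "z b \<in> {-1, 1}" using Suc.prems by auto
    then have "(z b)^2 = 1" by auto
    then show "(f b)^2 = (hv N U L z' b)^2"
      unfolding f_def by (simp add: power_mult_distrib)
  qed
  also have "\<dots> = 1" using Suc.IH z1 by blast
  finally show ?case .
qed

lemma run_alg_append: "run_alg D K z (xs @ ys) v = run_alg D K z ys (run_alg D K z xs v)"
  by (induction xs arbitrary: v) auto

lemma orth_unitary: "orthogonal_mat N A \<Longrightarrow> unitary_op N (\<lambda>a b. complex_of_real (A a b))"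
  unfolding orthogonal_mat_def unitary_op_def
  by (simp flip: of_real_mult of_real_sum)

context
  fixes N k m :: nat and U :: "nat \<Rightarrow> nat \<Rightarrow> real" and z :: "nat \<Rightarrow> real"
  assumes N: "0 < N" and k: "0 < k" and m: "0 < m" and U: "orthogonal_mat N U"
begin

definition "DD = N*(k*N^m)"
definition "Uc = (\<lambda>a b. complex_of_real (U a b))"
definition "Hc = (\<lambda>a b. complex_of_real (hh N a b))"
definition "Wop = mm DD (permop (shiftr N k)) (bdop N Uc)"
definition "Tr = mm DD (permop (shiftr N k)) (mm DD (bdop N Hc) (mm DD (permop (rotr N k m)) (bdop N Hc)))"
definition "V0 = mm DD (permop (shiftr N k)) (bdop N Hc)"
definition "Vs = concat (replicate m (replicate (k-1) Wop @ [Tr]))"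

definition "uc = (\<lambda>a::nat. complex_of_real (1 / sqrt (real N)))"
definition "e0c = (\<lambda>a::nat. if a = 0 then (1::complex) else 0)"
definition "cvc i = (\<lambda>a. complex_of_real (hv N U i (\<lambda>x. z (x + (k - i) * N)) a))"
definition "vv = (\<lambda>a. \<Sum>b<N. hh N a b * (z b * hv N U (k - 1) (\<lambda>x. z (x + N)) b))"
definition "vc = (\<lambda>a. complex_of_real (vv a))"
definition "sr r = (\<lambda>t. if t < m - r then e0c else vc)"

lemma unitary_Wop: "unitary_op DD Wop"
  unfolding Wop_def DD_def Uc_def
  by (intro unitary_mm unitary_perm shiftr_bij[OF N k m] unitary_bd[OF N] orth_unitary[OF U])

lemma unitary_Hc: "unitary_op DD (bdop N Hc)"
  unfolding DD_def Hc_def by (intro unitary_bd[OF N] orth_unitary hh_orth)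

lemma unitary_Tr: "unitary_op DD Tr"
  unfolding Tr_def
  by (intro unitary_mm unitary_Hc unitary_perm)
     (auto simp: DD_def intro: shiftr_bij[OF N k m] endo_bij rotr_bound[OF N k m] rotr_inj[OF N k m])

lemma unitary_V0: "unitary_op DD V0"
  unfolding V0_def
  by (intro unitary_mm unitary_Hc unitary_perm) (auto simp: DD_def intro: shiftr_bij[OF N k m])

lemma step_Wop:
  assumes i: "Suc i < k"
  shows "run_alg DD (k*N) z [Wop] (Qst N k m (k - 1 - i) (cvc i) s) = Qst N k m (k - 1 - Suc i) (cvc (Suc i)) s"
proof -
  have j0: "k - 1 - i < k" using i by simp
  have jj: "(k - 1 - i + k - 1) mod k = k - 1 - Suc i"
  proof -
    have "k - 1 - i + k - 1 = (k - 1 - Suc i) + k" using i by simp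
    then have "(k - 1 - i + k - 1) mod k = ((k - 1 - Suc i) + k) mod k" by simp
    also have "\<dots> = (k - 1 - Suc i) mod k" by (rule mod_add_self2)
    also have "\<dots> = k - 1 - Suc i" using i by simp
    finally show ?thesis .
  qed
  have vec: "(\<lambda>a. \<Sum>b<N. Uc a b * (complex_of_real (z (b + N * (k - 1 - i))) * cvc i b)) = cvc (Suc i)"
  proof (rule ext)
    fix a
    have f: "(\<lambda>x. z (x + (N + (k - Suc i) * N))) = (\<lambda>x. z (x + (k - i) * N))"
    proof (rule ext)
      fix x
      have "k - i = Suc (k - Suc i)" using i by simp
      then have "(k - i) * N = N + (k - Suc i) * N" by simp
      then show "z (x + (N + (k - Suc i) * N)) = z (x + (k - i) * N)" by simp
    qed
    have g: "N * (k - 1 - i) = (k - Suc i) * N" by (simp add: mult.commute)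
    show "(\<Sum>b<N. Uc a b * (complex_of_real (z (b + N * (k - 1 - i))) * cvc i b)) = cvc (Suc i) a"
      unfolding cvc_def Uc_def g by (simp add: f add.assoc)
  qed
  show ?thesis
    unfolding run_alg.simps Wop_def apply_mm Q_query[OF N k m] DD_def
    unfolding Q_bd[OF N k m] Q_shift[OF N k m j0] jj vec ..
qed


lemma Q_cong_phi: "(\<forall>a<N. \<phi> a = \<phi>' a) \<Longrightarrow> Qst N k m j0 \<phi> s = Qst N k m j0 \<phi>' s"
  unfolding Qst_def using N by (intro ext) simp

lemma cvc0: "cvc 0 = uc"
  unfolding cvc_def uc_def by simp

lemma run_Wops: "i \<le> k - 1 \<Longrightarrow> run_alg DD (k*N) z (replicate i Wop) (Qst N k m (k - 1) uc s) = Qst N k m (k - 1 - i) (cvc i) s"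
proof (induction i)
  case 0 then show ?case by (simp add: cvc0)
next
  case (Suc i)
  have "replicate (Suc i) Wop = replicate i Wop @ [Wop]" by (simp add: replicate_append_same)
  then show ?case using Suc step_Wop[of i s] by (simp add: run_alg_append)
qed

lemma Hc_e0: "\<forall>a<N. (\<Sum>b<N. Hc a b * e0c b) = uc a"
proof (intro allI impI)
  fix a assume a: "a < N"
  have "(\<Sum>b<N. Hc a b * e0c b) = Hc a 0" using N
    by (simp add: e0c_def if_distrib sum.delta cong: if_cong)
  then show "(\<Sum>b<N. Hc a b * e0c b) = uc a" using hh_col0[OF N a] by (simp add: Hc_def uc_def)
qed

lemma trans_step:
  assumes s0: "s 0 = e0c"
  shows "run_alg DD (k*N) z [Tr] (Qst N k m 0 (cvc (k - 1)) s) = Qst N k m (k - 1) uc (\<lambda>t. if Suc t < m then s (Suc t) else vc)"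
proof -
  have k0: "0 < k" by (rule k)
  have v: "(\<lambda>a. \<Sum>b<N. Hc a b * (complex_of_real (z (b + N * 0)) * cvc (k - 1) b)) = vc"
  proof -
    have "k - (k - 1) = 1" using k by simp
    then show ?thesis unfolding Hc_def cvc_def vc_def vv_def by (simp add: fun_eq_iff)
  qed
  have "run_alg DD (k*N) z [Tr] (Qst N k m 0 (cvc (k - 1)) s)
     = apply_op DD Tr (Qst N k m 0 (\<lambda>a. complex_of_real (z (a + N * 0)) * cvc (k - 1) a) s)"
    by (simp add: Q_query[OF N k m])
  also have "\<dots> = apply_op DD (permop (shiftr N k)) (apply_op DD (bdop N Hc)
        (apply_op DD (permop (rotr N k m)) (Qst N k m 0 vc s)))"
    unfolding Tr_def apply_mm unfolding DD_def Q_bd[OF N k m] v ..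
  also have "\<dots> = apply_op DD (permop (shiftr N k)) (apply_op DD (bdop N Hc)
        (Qst N k m 0 e0c (\<lambda>t. if Suc t < m then s (Suc t) else vc)))"
    unfolding DD_def Q_rot[OF N k m] s0 ..
  also have "\<dots> = apply_op DD (permop (shiftr N k)) (Qst N k m 0 uc (\<lambda>t. if Suc t < m then s (Suc t) else vc))"
    unfolding DD_def Q_bd[OF N k m] using Q_cong_phi[OF Hc_e0] by simp
  also have "\<dots> = Qst N k m (k - 1) uc (\<lambda>t. if Suc t < m then s (Suc t) else vc)"
    unfolding DD_def Q_shift[OF N k m k0] using k by simp
  finally show ?thesis .
qed

lemma trial:
  assumes r: "r < m"
  shows "run_alg DD (k*N) z (replicate (k-1) Wop @ [Tr]) (Qst N k m (k - 1) uc (sr r)) = Qst N k m (k - 1) uc (sr (Suc r))"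
proof -
  have s0: "sr r 0 = e0c" using r by (simp add: sr_def)
  have e: "(\<lambda>t. if Suc t < m then sr r (Suc t) else vc) = sr (Suc r)"
    unfolding sr_def by (auto simp: fun_eq_iff)
  show ?thesis unfolding run_alg_append run_Wops[OF le_refl] using trans_step[of "sr r", OF s0] e by simp
qed

lemma trials: "r \<le> m \<Longrightarrow> run_alg DD (k*N) z (concat (replicate r (replicate (k-1) Wop @ [Tr]))) (Qst N k m (k - 1) uc (sr 0)) = Qst N k m (k - 1) uc (sr r)"
proof (induction r)
  case 0 then show ?case by simp
next
  case (Suc r)
  have "concat (replicate (Suc r) (replicate (k-1) Wop @ [Tr])) = concat (replicate r (replicate (k-1) Wop @ [Tr])) @ (replicate (k-1) Wop @ [Tr])"
    by (simp add: replicate_append_same[symmetric])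
  then show ?case using Suc trial[of r] by (simp add: run_alg_append del: append_assoc)
qed

lemma init: "apply_op DD V0 (\<lambda>x. if x = 0 then 1 else 0) = Qst N k m (k - 1) uc (sr 0)"
proof -
  have k0: "0 < k" by (rule k)
  have "apply_op DD V0 (\<lambda>x. if x = 0 then 1 else 0) = apply_op DD (permop (shiftr N k)) (apply_op DD (bdop N Hc) (Qst N k m 0 e0c (\<lambda>t. e0c)))"
  proof -
    have e: "(\<lambda>x. if x = 0 then (1::complex) else 0) = Qst N k m 0 e0c (\<lambda>t. e0c)"
      using Q_init[OF N k m] unfolding e0c_def .
    show ?thesis unfolding e V0_def apply_mm ..
  qed
  also have "\<dots> = apply_op DD (permop (shiftr N k)) (Qst N k m 0 uc (\<lambda>t. e0c))"
    unfolding DD_def Q_bd[OF N k m] using Q_cong_phi[OF Hc_e0] by simp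
  also have "\<dots> = Qst N k m (k - 1) uc (\<lambda>t. e0c)"
    unfolding DD_def Q_shift[OF N k m k0] using k by simp
  also have "\<dots> = Qst N k m (k - 1) uc (sr 0)"
    by (rule Q_cong[OF N k m]) (simp add: sr_def)
  finally show ?thesis .
qed

lemma final: "run_alg DD (k*N) z Vs (apply_op DD V0 (\<lambda>x. if x = 0 then 1 else 0)) = Qst N k m (k - 1) uc (sr m)"
  unfolding init Vs_def by (rule trials) simp

end

lemma digit_prod_sum:
  assumes N: "0 < N"
  shows "(\<Sum>w<N^m. \<Prod>t<m. h t (digit N t w)) = (\<Prod>t<m. \<Sum>a<N. (h t a :: real))"
proof (induction m arbitrary: h)
  case 0 then show ?case by simp
next
  case (Suc m)
  have "(\<Sum>w<N^Suc m. \<Prod>t<Suc m. h t (digit N t w)) = (\<Sum>q<N^m. \<Sum>a<N. \<Prod>t<Suc m. h t (digit N t (a + N*q)))"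
    unfolding power_Suc by (rule sum_split_mult)
  also have "\<dots> = (\<Sum>q<N^m. \<Sum>a<N. h 0 a * (\<Prod>t<m. h (Suc t) (digit N t q)))"
  proof (intro sum.cong refl)
    fix q a assume "a \<in> {..<N}"
    then have a: "a < N" by simp
    show "(\<Prod>t<Suc m. h t (digit N t (a + N*q))) = h 0 a * (\<Prod>t<m. h (Suc t) (digit N t q))"
      unfolding prod.lessThan_Suc_shift digit_0[OF N a] digit_Suc[OF N a] ..
  qed
  also have "\<dots> = (\<Sum>a<N. h 0 a) * (\<Sum>q<N^m. \<Prod>t<m. h (Suc t) (digit N t q))"
    by (simp add: sum_distrib_left sum_distrib_right mult.commute)
  also have "\<dots> = (\<Sum>a<N. h 0 a) * (\<Prod>t<m. \<Sum>a<N. h (Suc t) a)"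
    using Suc.IH[of "\<lambda>t. h (Suc t)"] by simp
  also have "\<dots> = (\<Prod>t<Suc m. \<Sum>a<N. h t a)"
    by (rule prod.lessThan_Suc_shift[symmetric])
  finally show ?case .
qed

lemma prod_if_all: "(\<Prod>t<(m::nat). if P t then f t else (0::real)) = (if \<forall>t<m. P t then (\<Prod>t<m. f t) else 0)"
proof (induction m)
  case 0 then show ?case by simp
next
  case (Suc m) then show ?case by (auto simp: less_Suc_eq)
qed

lemma or_prob:
  assumes N: "0 < N" and g1: "(\<Sum>a<N. g a) = (1::real)"
  shows "(\<Sum>w<N^m. if \<exists>t<m. digit N t w = 0 then (\<Prod>t<m. g (digit N t w)) else 0) = 1 - (1 - g 0)^m"
proof -
  have "(\<Sum>w<N^m. if \<exists>t<m. digit N t w = 0 then (\<Prod>t<m. g (digit N t w)) else 0)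
      = (\<Sum>w<N^m. (\<Prod>t<m. g (digit N t w)) - (\<Prod>t<m. if digit N t w \<noteq> 0 then g (digit N t w) else 0))"
    by (intro sum.cong refl) (auto simp: prod_if_all)
  also have "\<dots> = (\<Prod>t<m. \<Sum>a<N. g a) - (\<Prod>t<m. \<Sum>a<N. if a \<noteq> 0 then g a else 0)"
    unfolding sum_subtractf digit_prod_sum[OF N, where m=m and h="\<lambda>t. g"]
      digit_prod_sum[OF N, where m=m and h="\<lambda>t a. if a \<noteq> 0 then g a else 0"] ..
  also have "(\<Sum>a<N. if a \<noteq> 0 then g a else 0) = 1 - g 0"
  proof -
    have "(\<Sum>a<N. if a \<noteq> 0 then g a else 0) = (\<Sum>a<N. g a - (if a = 0 then g a else 0))"
      by (intro sum.cong refl) auto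
    also have "\<dots> = 1 - g 0" using N g1 by (simp add: sum_subtractf sum.delta)
    finally show ?thesis .
  qed
  finally show ?thesis using g1 by simp
qed

lemma accept_val:
  assumes N: "0 < N" and k: "0 < k" and m: "0 < m" and U: "orthogonal_mat N U"
    and zpm: "\<forall>i<k*N. z i \<in> {-1, 1}"
  shows "(\<Sum>x\<in>{x \<in> {..<DD N k m}. \<exists>t<m. digit N t (x div N div k) = 0}.
     (cmod (run_alg (DD N k m) (k*N) z (Vs N k m U) (apply_op (DD N k m) (V0 N k m) (\<lambda>x. if x = 0 then 1 else 0)) x))^2)
     = 1 - (1 - (rorrelation k N U z)^2)^m \<and> (rorrelation k N U z)^2 \<le> 1"
proof -
  define g where "g = (\<lambda>a. (vv N k U z a)^2)"
  define G where "G = (\<lambda>w. \<Prod>t<m. g (digit N t w))"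
  define Q where "Q = Qst N k m (k - 1) (uc N) (sr N k m U z m)"
  have fin: "run_alg (DD N k m) (k*N) z (Vs N k m U) (apply_op (DD N k m) (V0 N k m) (\<lambda>x. if x = 0 then 1 else 0)) = Q"
    unfolding Q_def by (rule final[OF N k m U])
  have srm: "sr N k m U z m = (\<lambda>t. vc N k U z)" using sr_def[OF N k m U] by simp
  have DD: "DD N k m = N*(k*N^m)" using DD_def[OF N k m U] .
  have Qv: "\<And>a j w. a < N \<Longrightarrow> j < k \<Longrightarrow> w < N^m \<Longrightarrow>
      (cmod (Q (a + N*(j + k*w))))^2 = (if j = k - 1 then (1 / real N) * G w else 0)"
  proof -
    fix a j w assume a: "a < N" and j: "j < k" and w: "w < N^m"
    have lt: "a + N*(j + k*w) < N*(k*N^m)" by (rule comb_bound[OF a j w])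
    define r where "r = 1 / sqrt (real N) * (\<Prod>t<m. vv N k U z (digit N t w))"
    have Qe: "Q (a + N*(j + k*w)) = (if j = k - 1 then complex_of_real r else 0)"
      unfolding Q_def Qst_def srm decomp[OF N k a j] r_def using lt
      by (simp add: uc_def[OF N k m U] vc_def[OF N k m U] of_real_prod)
    have r2: "r^2 = (1 / real N) * G w"
      using N unfolding G_def g_def r_def by (simp add: power_mult_distrib power_divide prod_power_distrib)
    show "(cmod (Q (a + N*(j + k*w))))^2 = (if j = k - 1 then (1 / real N) * G w else 0)"
    proof (cases "j = k - 1")
      case True
      then have "cmod (Q (a + N*(j + k*w))) = \<bar>r\<bar>" unfolding Qe by simp
      then show ?thesis using True r2 by simp
    next
      case False
      then show ?thesis unfolding Qe by simp
    qed
  qed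
  have g1: "(\<Sum>a<N. g a) = 1"
  proof -
    define f where "f = (\<lambda>b. z b * hv N U (k - 1) (\<lambda>x. z (x + N)) b)"
    have "(\<Sum>a<N. g a) = (\<Sum>b<N. (f b)^2)"
      unfolding g_def vv_def[OF N k m U] f_def by (rule orth_norm[OF hh_orth])
    also have "\<dots> = (\<Sum>b<N. (hv N U (k - 1) (\<lambda>x. z (x + N)) b)^2)"
    proof (intro sum.cong refl)
      fix b assume "b \<in> {..<N}"
      then have "b < k*N" using k by (simp add: less_le_trans[of b N "k*N"])
      then have "(z b)^2 = 1" using zpm by auto
      then show "(f b)^2 = (hv N U (k - 1) (\<lambda>x. z (x + N)) b)^2"
        unfolding f_def by (simp add: power_mult_distrib)
    qed
    also have "\<dots> = 1"
    proof (rule hv_norm[OF N U])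
      show "\<forall>i<(k - 1) * N. z (i + N) \<in> {-1, 1}"
      proof (intro allI impI)
        fix i assume "i < (k - 1) * N"
        then have "i + N < k * N" using k by (metis add.commute add_less_cancel_left mult_eq_if not_gr0)
        then show "z (i + N) \<in> {-1, 1}" using zpm by blast
      qed
    qed
    finally show "(\<Sum>a<N. g a) = 1" .
  qed
  have g0: "g 0 = (rorrelation k N U z)^2"
  proof -
    have "vv N k U z 0 = (\<Sum>b<N. (1 / sqrt (real N)) * (z b * hv N U (k - 1) (\<lambda>x. z (x + N)) b))"
      unfolding vv_def[OF N k m U] using hh_sym hh_col0[OF N] by (intro sum.cong refl) auto
    also have "\<dots> = rorrelation (Suc (k - 1)) N U z" by (rule rorr_hv[OF N, symmetric])
    finally show ?thesis unfolding g_def using k by simp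
  qed
  have "(\<Sum>x\<in>{x \<in> {..<DD N k m}. \<exists>t<m. digit N t (x div N div k) = 0}. (cmod (Q x))^2)
      = (\<Sum>x<N*(k*N^m). if \<exists>t<m. digit N t (x div N div k) = 0 then (cmod (Q x))^2 else 0)"
    unfolding DD by (rule sum.inter_filter) simp
  also have "\<dots> = (\<Sum>w<N^m. \<Sum>j<k. \<Sum>a<N. if \<exists>t<m. digit N t w = 0 then (cmod (Q (a + N*(j + k*w))))^2 else 0)"
    unfolding sum_split_mult[of _ N "k*N^m"] sum_split_mult[of _ k "N^m"]
    using decomp[OF N k] by (intro sum.cong refl) simp
  also have "\<dots> = (\<Sum>w<N^m. if \<exists>t<m. digit N t w = 0 then G w else 0)"
  proof (intro sum.cong refl)
    fix w assume "w \<in> {..<N^m}"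
    then have w: "w < N^m" by simp
    have "(\<Sum>j<k. \<Sum>a<N. if \<exists>t<m. digit N t w = 0 then (cmod (Q (a + N*(j + k*w))))^2 else 0)
        = (\<Sum>j<k. \<Sum>a<N. if \<exists>t<m. digit N t w = 0 then (if j = k - 1 then (1 / real N) * G w else 0) else 0)"
    proof (intro sum.cong refl)
      fix j a assume "j \<in> {..<k}" "a \<in> {..<N}"
      then have "(cmod (Q (a + N*(j + k*w))))^2 = (if j = k - 1 then (1 / real N) * G w else 0)"
        using w by (intro Qv) auto
      then show "(if \<exists>t<m. digit N t w = 0 then (cmod (Q (a + N*(j + k*w))))^2 else 0)
         = (if \<exists>t<m. digit N t w = 0 then (if j = k - 1 then (1 / real N) * G w else 0) else 0)"
        by presburger
    qed
    also have "\<dots> = (\<Sum>j<k. if j = k - 1 then (if \<exists>t<m. digit N t w = 0 then G w else 0) else 0)"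
      using N by (intro sum.cong refl) auto
    also have "\<dots> = (if \<exists>t<m. digit N t w = 0 then G w else 0)"
      using k by (simp add: sum.delta)
    finally show "(\<Sum>j<k. \<Sum>a<N. if \<exists>t<m. digit N t w = 0 then (cmod (Q (a + N*(j + k*w))))^2 else 0)
        = (if \<exists>t<m. digit N t w = 0 then G w else 0)" .
  qed
  also have "\<dots> = 1 - (1 - g 0)^m"
    unfolding G_def by (rule or_prob[OF N g1])
  finally have "(\<Sum>x\<in>{x \<in> {..<DD N k m}. \<exists>t<m. digit N t (x div N div k) = 0}. (cmod (Q x))^2) = 1 - (1 - g 0)^m" .
  moreover have "g 0 \<le> 1"
  proof -
    have "g 0 \<le> (\<Sum>a<N. g a)" using N unfolding g_def by (intro member_le_sum) auto
    then show ?thesis using g1 by simp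
  qed
  ultimately show ?thesis unfolding fin g0 by simp

qed

lemma ineq_yes:
  fixes p :: real
  assumes k: "1 \<le> k" and p1: "p \<le> 1" and pq: "1 / 4^k \<le> p"
  shows "2/3 \<le> 1 - (1 - p)^(5 * 4^(k-1))"
proof -
  define c :: real where "c = 4^(k-1)"
  have c0: "0 < c" unfolding c_def by simp
  have kk: "k = Suc (k - 1)" using k by simp
  have c4: "(4::real)^k = 4 * c" unfolding c_def by (subst kk) simp
  define q where "q = 1 / (4 * c)"
  have q0: "0 \<le> q" using c0 unfolding q_def by simp
  have mr: "real (5 * 4^(k-1)) = 5 * c" unfolding c_def by simp
  have "(1 - p)^(5 * 4^(k-1)) \<le> (1 - q)^(5 * 4^(k-1))"
    using p1 pq c4 unfolding q_def by (intro power_mono) auto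
  also have "\<dots> \<le> (exp (-q))^(5 * 4^(k-1))"
    using p1 pq c4 q0 unfolding q_def
    by (intro power_mono) (use exp_ge_add_one_self[of "-1/(4*c)"] in auto)
  also have "\<dots> = exp (real (5 * 4^(k-1)) * (-q))" by (rule exp_of_nat_mult[symmetric])
  also have "real (5 * 4^(k-1)) * (-q) = - (5/4)" unfolding mr q_def using c0 by simp
  also have "exp (- (5/4::real)) \<le> 1/3"
  proof -
    have "(5/4::real)^5 \<le> exp (1/4) ^ 5"
      using exp_ge_add_one_self[of "1/4::real"] by (intro power_mono) auto
    also have "exp (1/4::real) ^ 5 = exp (5/4)" using exp_of_nat_mult[of 5 "1/4::real"] by simp
    finally have e: "(5/4::real)^5 \<le> exp (5/4)" .
    have "(3::real) \<le> (5/4)^5" by (simp add: power_divide)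
    then have "3 \<le> exp (5/4::real)" using e by linarith
    then show ?thesis by (simp add: exp_minus field_simps)
  qed
  finally show ?thesis by simp
qed

lemma ineq_no:
  fixes p :: real
  assumes k: "1 \<le> k" and p0: "0 \<le> p" and pq: "p \<le> 1 / (4 * 4^k)"
  shows "1 - (1 - p)^(5 * 4^(k-1)) \<le> 1/3"
proof -
  define c :: real where "c = 4^(k-1)"
  have c0: "0 < c" unfolding c_def by simp
  have kk: "k = Suc (k - 1)" using k by simp
  have c4: "(4::real)^k = 4 * c" unfolding c_def by (subst kk) simp
  have mr: "real (5 * 4^(k-1)) = 5 * c" unfolding c_def by simp
  have c1: "1 \<le> c" unfolding c_def by simp
  have "1 / (4 * 4^k) \<le> (1::real)" unfolding c4 using c1 by simp
  then have p1: "p \<le> 1" using pq by linarith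
  have "1 + real (5 * 4^(k-1)) * (-p) \<le> (1 + (-p))^(5 * 4^(k-1))"
    by (rule Bernoulli_inequality) (use p1 in simp)
  then have "1 - (1 - p)^(5 * 4^(k-1)) \<le> 5 * c * p" unfolding mr by simp
  also have "\<dots> \<le> 5 * c * (1 / (16 * c))" using pq c4 c0 by (intro mult_left_mono) auto
  also have "\<dots> = 5/16" using c0 by simp
  finally show ?thesis by simp
qed

theorem mainTheorem2:
  shows "\<exists>C::real. \<forall>(k::nat) (n::nat) (U::nat \<Rightarrow> nat \<Rightarrow> real).
     k \<ge> 1 \<longrightarrow> orthogonal_mat (2 ^ n) U \<longrightarrow>
     (\<exists>W V0 Vs A. query_algorithm (k * 2 ^ n) W V0 Vs A
        \<and> real (length Vs) \<le> C * real k * 4 ^ k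
        \<and> (\<forall>z::nat \<Rightarrow> real. (\<forall>i < k * 2 ^ n. z i \<in> {-1, 1}) \<longrightarrow>
              (rorrelation k (2 ^ n) U z \<ge> 1 / 2 ^ k \<longrightarrow>
                 accept_prob (k * 2 ^ n) W V0 Vs A z \<ge> 2 / 3)
            \<and> (\<bar>rorrelation k (2 ^ n) U z\<bar> \<le> (1 / 2) * (1 / 2 ^ k) \<longrightarrow>
                 accept_prob (k * 2 ^ n) W V0 Vs A z \<le> 1 / 3)))"
proof (intro exI[of _ "2::real"] allI impI)
  fix k n :: nat and U :: "nat \<Rightarrow> nat \<Rightarrow> real"
  assume k1: "1 \<le> k" and U0: "orthogonal_mat (2 ^ n) U"
  define N :: nat where "N = 2 ^ n"
  define m :: nat where "m = 5 * 4^(k-1)"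
  have N: "0 < N" unfolding N_def by simp
  have k: "0 < k" using k1 by simp
  have m: "0 < m" unfolding m_def by simp
  have U: "orthogonal_mat N U" using U0 unfolding N_def .
  define A where "A = {x \<in> {..<DD N k m}. \<exists>t<m. digit N t (x div N div k) = 0}"
  have KW: "k * N * N^m = DD N k m" using DD_def[OF N k m U] by (simp add: mult_ac)
  have accz: "\<And>z. \<forall>i<k * N. z i \<in> {- 1, 1} \<Longrightarrow>
      accept_prob (k * N) (N ^ m) (V0 N k m) (Vs N k m U) A z = 1 - (1 - (rorrelation k N U z)^2)^m
      \<and> (rorrelation k N U z)^2 \<le> 1"
  proof -
    fix z :: "nat \<Rightarrow> real"
    assume zpm: "\<forall>i<k * N. z i \<in> {- 1, 1}"
    show "accept_prob (k * N) (N ^ m) (V0 N k m) (Vs N k m U) A z = 1 - (1 - (rorrelation k N U z)^2)^m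
      \<and> (rorrelation k N U z)^2 \<le> 1"
      using accept_val[OF N k m U zpm]
      unfolding accept_prob_def final_state_def KW A_def by auto
  qed
  show "\<exists>W V0 Vs A. query_algorithm (k * 2 ^ n) W V0 Vs A
        \<and> real (length Vs) \<le> 2 * real k * 4 ^ k
        \<and> (\<forall>z::nat \<Rightarrow> real. (\<forall>i < k * 2 ^ n. z i \<in> {-1, 1}) \<longrightarrow>
              (rorrelation k (2 ^ n) U z \<ge> 1 / 2 ^ k \<longrightarrow>
                 accept_prob (k * 2 ^ n) W V0 Vs A z \<ge> 2 / 3)
            \<and> (\<bar>rorrelation k (2 ^ n) U z\<bar> \<le> (1 / 2) * (1 / 2 ^ k) \<longrightarrow>
                 accept_prob (k * 2 ^ n) W V0 Vs A z \<le> 1 / 3))"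
    unfolding N_def[symmetric]
  proof (intro exI[of _ "N^m"] exI[of _ "V0 N k m"] exI[of _ "Vs N k m U"] exI[of _ A] conjI allI impI)
    show "query_algorithm (k * N) (N ^ m) (V0 N k m) (Vs N k m U) A"
      unfolding query_algorithm_def KW
    proof (intro conjI ballI)
      show "1 \<le> N^m" using N by simp
      show "unitary_op (DD N k m) (V0 N k m)" by (rule unitary_V0[OF N k m U])
      fix V assume "V \<in> set (Vs N k m U)"
      then have "V = Wop N k m U \<or> V = Tr N k m" unfolding Vs_def[OF N k m U]
        by (auto split: if_splits)
      then show "unitary_op (DD N k m) V" using unitary_Wop[OF N k m U] unitary_Tr[OF N k m U] by auto
    next
      show "A \<subseteq> {..<DD N k m}" unfolding A_def by auto
    qed
    have len: "length (Vs N k m U) = m * k"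
      unfolding Vs_def[OF N k m U] using k by (simp add: length_concat sum_list_replicate)
    show "real (length (Vs N k m U)) \<le> 2 * real k * 4 ^ k"
    proof -
      have kk: "k = Suc (k - 1)" using k by simp
      have "(4::real)^k = 4 * 4^(k-1)" by (subst kk) simp
      then show ?thesis unfolding len by (simp add: m_def)
    qed
  next
    fix z :: "nat \<Rightarrow> real"
    assume zpm: "\<forall>i<k * N. z i \<in> {- 1, 1}"
    assume yes: "1 / 2 ^ k \<le> rorrelation k N U z"
    have acc: "accept_prob (k * N) (N ^ m) (V0 N k m) (Vs N k m U) A z = 1 - (1 - (rorrelation k N U z)^2)^m"
      and sq1: "(rorrelation k N U z)^2 \<le> 1" using accz[OF zpm] by auto
    have p: "1 / 4^k \<le> (rorrelation k N U z)^2"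
    proof -
      have "(1 / 2^k)^2 \<le> (rorrelation k N U z)^2" using yes by (intro power_mono) auto
      moreover have "(1 / 2^k)^2 = (1 / 4^k :: real)"
      proof -
        have "(2::real)^k * 2^k = 4^k" by (simp flip: power_mult_distrib)
        then show ?thesis by (simp add: power2_eq_square)
      qed
      ultimately show ?thesis by simp
    qed
    have "2/3 \<le> 1 - (1 - (rorrelation k N U z)^2)^m" unfolding m_def by (rule ineq_yes[OF k1 sq1 p])
    then show "2 / 3 \<le> accept_prob (k * N) (N ^ m) (V0 N k m) (Vs N k m U) A z" unfolding acc .
  next
    fix z :: "nat \<Rightarrow> real"
    assume zpm: "\<forall>i<k * N. z i \<in> {- 1, 1}"
    assume no: "\<bar>rorrelation k N U z\<bar> \<le> 1 / 2 * (1 / 2 ^ k)"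
    have acc: "accept_prob (k * N) (N ^ m) (V0 N k m) (Vs N k m U) A z = 1 - (1 - (rorrelation k N U z)^2)^m"
      using accz[OF zpm] by auto
    have p: "(rorrelation k N U z)^2 \<le> 1 / (4 * 4^k)"
    proof -
      have "\<bar>rorrelation k N U z\<bar>^2 \<le> (1 / 2 * (1 / 2 ^ k))^2" using no by (intro power_mono) auto
      moreover have "(1 / 2 * (1 / 2 ^ k))^2 = (1 / (4 * 4^k) :: real)"
      proof -
        have "(2::real)^k * 2^k = 4^k" by (simp flip: power_mult_distrib)
        then show ?thesis by (simp add: power2_eq_square)
      qed
      ultimately show ?thesis by simp
    qed
    have "1 - (1 - (rorrelation k N U z)^2)^m \<le> 1/3" unfolding m_def by (rule ineq_no[OF k1 _ p]) simp
    then show "accept_prob (k * N) (N ^ m) (V0 N k m) (Vs N k m U) A z \<le> 1 / 3" unfolding acc .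
  qed
qed

end
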